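(* Let $M\subset\mathbb{P}^2$ be an open subset equipped with the induced standard flat path geometry (paths are pieces of projective lines). Suppose $M$ is given another flat path geometry structure. Then there exists a section $\sigma\in H^0(M,\mathrm{Sym}^3(T^*M)\otimes\mathcal{O}(3))$ such that the two path geometries coincide along the generalized 3-web $\mathcal{W}_\sigma=\sigma^{-1}(0)\subset\mathbb{P}(TM)$ defined by the zero locus of $\sigma$, i.e. at every point of $\sigma^{-1}(0)$ the leaves of the two path-geometry foliations of $\mathbb{P}(TM)$ through that point have the same tangent line. Moreover, the two path geometries are isomorphic when $\sigma\equiv 0$.
   Context: Complex holomorphic category. For a surface $M$, $\mathbb{P}(TM)\to M$ is the projective tangent bundle with canonical contact 2-plane field $\mathcal{D}$. A path geometry on $M$ is a foliation of $\mathbb{P}(TM)$ by curves tangent to $\mathcal{D}$ and transversal to the fibers of $\mathbb{P}(TM)\to M$ (its leaves project to the paths, one through each point in each direction). It is flat if locally equivalent to the standard path geometry of lines in $\mathbb{P}^2$. $\mathcal{O}(3)$ denotes the cube of the hyperplane bundle of $\mathbb{P}^2$ restricted to $M$. A section $\sigma$ of $\mathrm{Sym}^3(T^*M)\otimes\mathcal{O}(3)$ is at each point a cubic form on $T_xM$ defined up to a nonzero scalar, so its zero locus $\sigma^{-1}(0)=\{[\xi]\in\mathbb{P}(T_xM): \sigma(\xi,\xi,\xi)=0,\ x\in M\}\subset\mathbb{P}(TM)$ is well defined; when $\sigma\neq0$ has no repeated roots it consists of three tangent directions at each point, i.e. a 3-web. *)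

theory Defs
  imports "HOL-Complex_Analysis.Complex_Analysis"
begin

text \<open>A point of P^2 is a nonzero vector of complex^3
  up to nonzero scalars; an open subset M of P^2 is encoded by its (open, C*-invariant)
  cone C of homogeneous representatives.\<close>

definition proj_open :: "(complex^3) set \<Rightarrow> bool" where
  "proj_open C \<longleftrightarrow> open C \<and> 0 \<notin> C \<and> (\<forall>v\<in>C. \<forall>a::complex. a \<noteq> 0 \<longrightarrow> a *s v \<in> C)"

text \<open>w represents a tangent direction at [v] (the line through [v] and [w]).\<close>
definition indep :: "complex^3 \<Rightarrow> complex^3 \<Rightarrow> bool" where
  "indep v w \<longleftrightarrow> v \<noteq> 0 \<and> (\<forall>c::complex. w \<noteq> c *s v)"

definition det3 :: "complex^3 \<Rightarrow> complex^3 \<Rightarrow> complex^3 \<Rightarrow> complex" where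
  "det3 a b c =
     a$1 * (b$2 * c$3 - b$3 * c$2) - a$2 * (b$1 * c$3 - b$3 * c$1) + a$3 * (b$1 * c$2 - b$2 * c$1)"

text \<open>Holomorphy in several complex variables (Osgood: continuous and separately holomorphic).\<close>
definition holo_on :: "(complex^'n) set \<Rightarrow> (complex^'n \<Rightarrow> complex) \<Rightarrow> bool" where
  "holo_on U f \<longleftrightarrow> open U \<and> continuous_on U f \<and>
     (\<forall>z\<in>U. \<forall>i. (\<lambda>t. f (z + t *s axis i 1)) field_differentiable (at 0))"

definition holo2_on :: "((complex^3) \<times> (complex^3)) set \<Rightarrow> (complex^3 \<Rightarrow> complex^3 \<Rightarrow> complex) \<Rightarrow> bool" where
  "holo2_on \<Omega> f \<longleftrightarrow> open \<Omega> \<and> continuous_on \<Omega> (case_prod f) \<and>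
     (\<forall>(v,w)\<in>\<Omega>. \<forall>i.
        (\<lambda>t. f (v + t *s axis i 1) w) field_differentiable (at 0) \<and>
        (\<lambda>t. f v (w + t *s axis i 1)) field_differentiable (at 0))"

text \<open>Projective tangent bundle P(TM), in homogeneous coordinates.\<close>
definition ptb :: "(complex^3) set \<Rightarrow> ((complex^3) \<times> (complex^3)) set" where
  "ptb C = {(v,w). v \<in> C \<and> indep v w}"

text \<open>A path geometry on M, i.e. a foliation of P(TM) by curves tangent to the contact
  distribution and transversal to the fibres, encoded by its tangent line field:
  at the point ([v],[v,w]) the leaf tangent (inside the contact plane, transversal to
  the fibre) is determined by the number alpha v w = det(g, g', g'')(0) for any lift g of
  the projected path with g(0)=v, g'(0)=w.  The standard path geometry of lines is alpha = 0.\<close>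
definition path_geometry :: "(complex^3) set \<Rightarrow> (complex^3 \<Rightarrow> complex^3 \<Rightarrow> complex) \<Rightarrow> bool" where
  "path_geometry C \<alpha> \<longleftrightarrow> proj_open C \<and> holo2_on (ptb C) \<alpha> \<and>
     (\<forall>(v,w)\<in>ptb C. \<forall>a b c::complex. a \<noteq> 0 \<and> b \<noteq> 0 \<longrightarrow>
        \<alpha> (a *s v) (b *s w + c *s v) = b^3 * \<alpha> v w)"

definition std_geometry :: "complex^3 \<Rightarrow> complex^3 \<Rightarrow> complex" where
  "std_geometry v w = 0"

definition cderiv :: "(complex \<Rightarrow> complex^3) \<Rightarrow> complex \<Rightarrow> complex^3" where
  "cderiv g t = (\<chi> i. deriv (\<lambda>s. g s $ i) t)"

text \<open>Lifted parametrisations of paths (projections of leaves) of the geometry alpha.\<close>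
definition leaf :: "(complex^3) set \<Rightarrow> (complex^3 \<Rightarrow> complex^3 \<Rightarrow> complex) \<Rightarrow> complex set
                      \<Rightarrow> (complex \<Rightarrow> complex^3) \<Rightarrow> bool" where
  "leaf C \<alpha> D g \<longleftrightarrow> open D \<and> (\<forall>i. (\<lambda>t. g t $ i) holomorphic_on D) \<and>
     (\<forall>t\<in>D. g t \<in> C \<and> indep (g t) (cderiv g t) \<and>
        det3 (g t) (cderiv g t) (cderiv (cderiv g) t) = \<alpha> (g t) (cderiv g t))"

text \<open>An isomorphism of path geometries (C,alpha) \<rightarrow> (C',alpha'): a biholomorphism of the
  corresponding open subsets of P^2 (given by a homogeneous lift phi) mapping paths to paths.\<close>
definition path_iso :: "(complex^3) set \<Rightarrow> (complex^3 \<Rightarrow> complex^3 \<Rightarrow> complex) \<Rightarrow>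
     (complex^3) set \<Rightarrow> (complex^3 \<Rightarrow> complex^3 \<Rightarrow> complex) \<Rightarrow> (complex^3 \<Rightarrow> complex^3) \<Rightarrow> bool" where
  "path_iso C \<alpha> C' \<alpha>' \<phi> \<longleftrightarrow> proj_open C \<and> proj_open C' \<and>
     (\<forall>i. holo_on C (\<lambda>v. \<phi> v $ i)) \<and>
     (\<forall>v\<in>C. \<forall>a::complex. a \<noteq> 0 \<longrightarrow> \<phi> (a *s v) = a *s \<phi> v) \<and>
     (\<forall>v\<in>C. \<phi> v \<in> C') \<and>
     (\<forall>v'\<in>C'. \<exists>v\<in>C. \<exists>a::complex. a \<noteq> 0 \<and> \<phi> v = a *s v') \<and>
     (\<forall>u\<in>C. \<forall>v\<in>C. \<forall>a::complex. \<phi> u = a *s \<phi> v \<longrightarrow> (\<exists>b::complex. u = b *s v)) \<and>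
     (\<forall>v\<in>C. \<exists>L. (\<phi> has_derivative L) (at v) \<and> inj L) \<and>
     (\<forall>D g. leaf C \<alpha> D g \<longrightarrow> leaf C' \<alpha>' D (\<phi> \<circ> g))"

definition flat :: "(complex^3) set \<Rightarrow> (complex^3 \<Rightarrow> complex^3 \<Rightarrow> complex) \<Rightarrow> bool" where
  "flat C \<alpha> \<longleftrightarrow> (\<forall>v\<in>C. \<exists>U U' \<phi>. v \<in> U \<and> U \<subseteq> C \<and> path_iso U \<alpha> U' std_geometry \<phi>)"

text \<open>Sections of Sym^3(T*M) \<otimes> O(3): a holomorphic family of cubic forms
  S(v,w) = sum c_ijk(v) w_i w_j w_k, invariant under w \<mapsto> w + c v (so a cubic form on
  C^3/<v> = tangent directions) and homogeneous of degree 0 in v.\<close>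
definition cubic_eval :: "(3 \<Rightarrow> 3 \<Rightarrow> 3 \<Rightarrow> complex^3 \<Rightarrow> complex) \<Rightarrow> complex^3 \<Rightarrow> complex^3 \<Rightarrow> complex" where
  "cubic_eval c v w = (\<Sum>i\<in>UNIV. \<Sum>j\<in>UNIV. \<Sum>k\<in>UNIV. c i j k v * w$i * w$j * w$k)"

definition section3 :: "(complex^3) set \<Rightarrow> (3 \<Rightarrow> 3 \<Rightarrow> 3 \<Rightarrow> complex^3 \<Rightarrow> complex) \<Rightarrow> bool" where
  "section3 C c \<longleftrightarrow> (\<forall>i j k. holo_on C (c i j k)) \<and>
     (\<forall>v\<in>C. \<forall>w. \<forall>s::complex. cubic_eval c v (w + s *s v) = cubic_eval c v w) \<and>
     (\<forall>v\<in>C. \<forall>w. \<forall>a::complex. a \<noteq> 0 \<longrightarrow> cubic_eval c (a *s v) w = cubic_eval c v w)"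

end

theory Submission
  imports Defs
begin
no_notation fps_nth (infixl \<open>$\<close> 75)

lemma indep_shift: "indep v (w + s *s v) \<longleftrightarrow> indep v w"
proof -
  have "(w + s *s v = c *s v) \<longleftrightarrow> (w = (c - s) *s v)" for c
    by (metis add_diff_cancel_right' diff_add_cancel vector_sadd_rdistrib)
  then show ?thesis unfolding indep_def
    by (metis add_diff_cancel_right') 
qed

lemma indep_scale_left: "a \<noteq> 0 \<Longrightarrow> indep (a *s v) w \<longleftrightarrow> indep v w"
  unfolding indep_def
proof -
  assume a: "a \<noteq> 0"
  have 1: "(\<forall>c. w \<noteq> c *s (a *s v)) \<longleftrightarrow> (\<forall>c. w \<noteq> c *s v)"
  proof
    assume h: "\<forall>c. w \<noteq> c *s (a *s v)"
    show "\<forall>c. w \<noteq> c *s v"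
    proof
      fix c show "w \<noteq> c *s v" using h[rule_format, of "c / a"] a by (simp add: vector_smult_assoc)
    qed
  next
    assume h: "\<forall>c. w \<noteq> c *s v"
    show "\<forall>c. w \<noteq> c *s (a *s v)" using h by (simp add: vector_smult_assoc)
  qed
  show "(a *s v \<noteq> 0 \<and> (\<forall>c. w \<noteq> c *s (a *s v))) = (v \<noteq> 0 \<and> (\<forall>c. w \<noteq> c *s v))"
    using 1 a by (simp add: vector_mul_eq_0)
qed

lemma indep_scale_right: "b \<noteq> 0 \<Longrightarrow> indep v (b *s w) \<longleftrightarrow> indep v w"
  unfolding indep_def
  by (metis vector_smult_assoc nonzero_mult_div_cancel_left vector_mul_lcancel divide_eq_0_iff times_divide_eq_right)

definition Qf :: "(complex^3 \<Rightarrow> complex^3 \<Rightarrow> complex) \<Rightarrow> complex^3 \<Rightarrow> complex^3 \<Rightarrow> complex" where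
  "Qf \<alpha> v u = (if indep v u then \<alpha> v u else 0)"

lemma pg_hom:
  assumes "path_geometry C \<alpha>" "v \<in> C" "indep v w" "a \<noteq> 0" "b \<noteq> 0"
  shows "\<alpha> (a *s v) (b *s w + c *s v) = b^3 * \<alpha> v w"
  using assms unfolding path_geometry_def ptb_def by blast

lemma Q_inv:
  assumes "path_geometry C \<alpha>" "v \<in> C"
  shows "Qf \<alpha> v (w + s *s v) = Qf \<alpha> v w"
  using pg_hom[OF assms, of w 1 1 s] unfolding Qf_def by (simp add: indep_shift)

lemma Q_hom:
  assumes "path_geometry C \<alpha>" "v \<in> C" "a \<noteq> 0"
  shows "Qf \<alpha> (a *s v) w = Qf \<alpha> v w"
  using pg_hom[OF assms(1,2), of w a 1 0] assms(3) unfolding Qf_def by (simp add: indep_scale_left)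

lemma Q_scale:
  assumes "path_geometry C \<alpha>" "v \<in> C" "b \<noteq> 0"
  shows "Qf \<alpha> v (b *s w) = b^3 * Qf \<alpha> v w"
  using pg_hom[OF assms(1,2), of w 1 b 0] assms(3) unfolding Qf_def by (simp add: indep_scale_right)

lemma chart_indep:
  fixes v :: "complex^3"
  assumes vi: "v$i \<noteq> 0" and d: "i\<noteq>j" "i\<noteq>k" "j\<noteq>k" and xy: "x \<noteq> 0 \<or> y \<noteq> 0"
  shows "indep v (x *s axis j 1 + y *s axis k 1)"
  unfolding indep_def
proof (intro conjI allI)
  show "v \<noteq> 0" using vi by auto
  fix c
  show "x *s axis j 1 + y *s axis k 1 \<noteq> c *s v"
  proof
    assume e: "x *s axis j 1 + y *s axis k 1 = c *s v"
    have "c * v$i = 0" using arg_cong[OF e, of "\<lambda>u. u$i"] d by (simp add: axis_def)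
    hence c0: "c = 0" using vi by simp
    have "x = 0" using arg_cong[OF e, of "\<lambda>u. u$j"] d c0 by (simp add: axis_def)
    moreover have "y = 0" using arg_cong[OF e, of "\<lambda>u. u$k"] d c0 by (simp add: axis_def)
    ultimately show False using xy by simp
  qed
qed

lemma holo2_dir:
  assumes "path_geometry C \<alpha>" "(v,w) \<in> ptb C"
  shows "(\<lambda>t. \<alpha> v (w + t *s axis l 1)) field_differentiable (at 0)"
    and "(\<lambda>t. \<alpha> (v + t *s axis l 1) w) field_differentiable (at 0)"
  using assms unfolding path_geometry_def holo2_on_def by fast+

lemma shift_diff:
  assumes "(\<lambda>s. g (s + t)) field_differentiable (at 0)"
  shows "g field_differentiable (at t)"
  using assms DERIV_shift[of g _ 0 t] unfolding field_differentiable_def by simp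

lemma poly_chart:
  fixes v :: "complex^3"
  assumes pg: "path_geometry C \<alpha>" and vC: "v \<in> C" and vi: "v$i \<noteq> 0"
    and d: "i\<noteq>j" "i\<noteq>k" "j\<noteq>k"
  shows "\<exists>a0 a1 a2 a3. \<forall>x y. Qf \<alpha> v (x *s axis j 1 + y *s axis k 1)
            = a0*x^3 + a1*x^2*y + a2*x*y^2 + a3*y^3"
proof -
  define h where "h x y = Qf \<alpha> v (x *s axis j 1 + y *s axis k 1)" for x y
  have hom: "h (b*x) (b*y) = b^3 * h x y" if "b \<noteq> 0" for b x y
  proof -
    have e: "(b*x) *s axis j 1 + (b*y) *s axis k 1 = b *s (x *s axis j 1 + y *s axis k 1)"
      by (simp add: vector_smult_assoc vector_add_ldistrib)
    show ?thesis unfolding h_def e by (rule Q_scale[OF pg vC that])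
  qed
  have ha: "h x y = \<alpha> v (x *s axis j 1 + y *s axis k 1)" if "x \<noteq> 0 \<or> y \<noteq> 0" for x y
    using chart_indep[OF vi d that] unfolding h_def Qf_def by simp
  have h00: "h 0 0 = 0"
    unfolding h_def Qf_def indep_def by auto
  have ptb: "(v, x *s axis j 1 + y *s axis k 1) \<in> ptb C" if "x \<noteq> 0 \<or> y \<noteq> 0" for x y
    using chart_indep[OF vi d that] vC unfolding ptb_def by simp
  define g where "g t = h 1 t" for t
  define kk where "kk t = h t 1" for t
  have gd: "g field_differentiable (at t)" for t
  proof (rule shift_diff)
    have "(\<lambda>s. g (s + t)) = (\<lambda>s. \<alpha> v ((1 *s axis j 1 + t *s axis k 1) + s *s axis k 1))"
      unfolding g_def by (rule ext, subst ha, simp, simp add: algebra_simps vector_sadd_rdistrib)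
    then show "(\<lambda>s. g (s + t)) field_differentiable (at 0)"
      using holo2_dir(1)[OF pg ptb[of 1 t]] by simp
  qed
  have kd: "kk field_differentiable (at t)" for t
  proof (rule shift_diff)
    have "(\<lambda>s. kk (s + t)) = (\<lambda>s. \<alpha> v ((t *s axis j 1 + 1 *s axis k 1) + s *s axis j 1))"
      unfolding kk_def by (rule ext, subst ha, simp, simp add: algebra_simps vector_sadd_rdistrib)
    then show "(\<lambda>s. kk (s + t)) field_differentiable (at 0)"
      using holo2_dir(1)[OF pg ptb[of t 1]] by simp
  qed
  have holg: "g holomorphic_on UNIV" using gd by (simp add: holomorphic_on_def)
  have holk: "kk holomorphic_on UNIV" using kd by (simp add: holomorphic_on_def)
  have "continuous_on (cball 0 1) kk"
    using holomorphic_on_imp_continuous_on[OF holk] continuous_on_subset by blast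
  then have "bounded (kk ` cball 0 1)"
    by (intro compact_imp_bounded compact_continuous_image) auto
  then obtain B where B: "\<And>z. z \<in> cball 0 1 \<Longrightarrow> norm (kk z) \<le> B"
    unfolding bounded_iff by blast
  have ginv: "g z = z^3 * kk (1/z)" if "z \<noteq> 0" for z
    using hom[OF that, of "1/z" 1] that unfolding g_def kk_def by simp
  have gbound: "norm (g z) \<le> B * norm z ^ 3" if "1 \<le> norm z" for z
  proof -
    have z0: "z \<noteq> 0" using that by auto
    have "1/z \<in> cball 0 1" using that by (simp add: norm_divide divide_le_eq_1)
    then have "norm (kk (1/z)) \<le> B" by (rule B)
    then show ?thesis unfolding ginv[OF z0] norm_mult norm_power
      by (metis mult.commute mult_right_mono norm_ge_zero zero_le_power)
  qed
  define a where "a m = (deriv^^m) g 0 / fact m" for m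
  have gp: "g t = a 0 + a 1 * t + a 2 * t^2 + a 3 * t^3" for t
  proof -
    have "g t = (\<Sum>m\<le>3. a m * t^m)"
      unfolding a_def by (rule Liouville_polynomial[OF holg, of 1 B 3 t]) (rule gbound)
    also have "\<dots> = a 0 + a 1 * t + a 2 * t^2 + a 3 * t^3"
      by (simp add: eval_nat_numeral atMost_Suc algebra_simps)
    finally show ?thesis .
  qed
  have hx: "h x y = a 0 * x^3 + a 1 * x^2*y + a 2 * x*y^2 + a 3 * y^3" if "x \<noteq> 0" for x y
  proof -
    have "h x y = h (x*1) (x*(y/x))" using that by simp
    also have "\<dots> = x^3 * g (y/x)" using hom[OF that, of 1 "y/x"] unfolding g_def by simp
    also have "\<dots> = a 0 * x^3 + a 1 * x^2*y + a 2 * x*y^2 + a 3 * y^3"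
      unfolding gp using that by (simp add: field_simps power2_eq_square power3_eq_cube)
    finally show ?thesis .
  qed
  have k0: "kk 0 = a 3"
  proof -
    define p where "p s = a 0 * s^3 + a 1 * s^2 + a 2 * s + a 3" for s
    have "isCont kk 0" using kd field_differentiable_imp_continuous_at by blast
    then have l1: "(kk \<longlongrightarrow> kk 0) (at 0)" by (simp add: isCont_def)
    have "\<forall>\<^sub>F s in at 0. p s = kk s"
      unfolding eventually_at_filter using hx unfolding kk_def p_def by (auto intro!: always_eventually)
    moreover have "(p \<longlongrightarrow> p 0) (at 0)" unfolding p_def by (intro tendsto_intros)
    ultimately have "(kk \<longlongrightarrow> p 0) (at 0)" by (metis Lim_transform_eventually)
    then have "kk 0 = p 0" using l1 tendsto_unique[OF trivial_limit_at] by blast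
    then show ?thesis unfolding p_def by simp
  qed
  have "\<forall>x y. h x y = a 0 * x^3 + a 1 * x^2*y + a 2 * x*y^2 + a 3 * y^3"
  proof (intro allI)
    fix x y
    show "h x y = a 0 * x^3 + a 1 * x^2*y + a 2 * x*y^2 + a 3 * y^3"
    proof (cases "x = 0")
      case False then show ?thesis by (rule hx)
    next
      case True
      show ?thesis
      proof (cases "y = 0")
        case True with \<open>x = 0\<close> h00 show ?thesis by simp
      next
        case False
        have "h x y = h (y*0) (y*1)" using \<open>x=0\<close> by simp
        also have "\<dots> = y^3 * kk 0" using hom[OF False, of 0 1] unfolding kk_def by simp
        finally show ?thesis using k0 \<open>x=0\<close> by simp
      qed
    qed
  qed
  then show ?thesis unfolding h_def by blast
qed

lemma three_cases: "i \<noteq> j \<Longrightarrow> i \<noteq> k \<Longrightarrow> j \<noteq> k \<Longrightarrow> (l::3) = i \<or> l = j \<or> l = k"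
  using exhaust_3[of i] exhaust_3[of j] exhaust_3[of k] exhaust_3[of l] by fastforce

definition chartF :: "complex \<Rightarrow> complex \<Rightarrow> complex \<Rightarrow> complex \<Rightarrow> complex \<Rightarrow> complex \<Rightarrow> complex" where
  "chartF A0 A3 S Dm x y = A0*x^3 + ((S - Dm)/2 - A3)*x^2*y + ((S+Dm)/2 - A0)*x*y^2 + A3*y^3"

definition chartQ :: "(complex^3 \<Rightarrow> complex^3 \<Rightarrow> complex) \<Rightarrow> 3 \<Rightarrow> 3 \<Rightarrow> 3 \<Rightarrow> complex^3 \<Rightarrow> complex^3 \<Rightarrow> complex" where
  "chartQ \<alpha> i j k v u = chartF (\<alpha> v (axis j 1)) (\<alpha> v (axis k 1)) (\<alpha> v (axis j 1 + axis k 1))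
      (\<alpha> v (axis j 1 - axis k 1)) (u$j - u$i * v$j / v$i) (u$k - u$i * v$k / v$i)"

lemma Q_chart:
  fixes v :: "complex^3"
  assumes pg: "path_geometry C \<alpha>" and vC: "v \<in> C" and vi: "v$i \<noteq> 0"
    and d: "i\<noteq>j" "i\<noteq>k" "j\<noteq>k"
  shows "Qf \<alpha> v u = chartQ \<alpha> i j k v u"
proof -
  obtain a0 a1 a2 a3 where P: "\<And>x y. Qf \<alpha> v (x *s axis j 1 + y *s axis k 1)
            = a0*x^3 + a1*x^2*y + a2*x*y^2 + a3*y^3"
    using poly_chart[OF pg vC vi d] by blast
  have Qa: "Qf \<alpha> v (x *s axis j 1 + y *s axis k 1) = \<alpha> v (x *s axis j 1 + y *s axis k 1)"
    if "x \<noteq> 0 \<or> y \<noteq> 0" for x y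
    using chart_indep[OF vi d that] unfolding Qf_def by simp
  have ev: "\<alpha> v (x *s axis j 1 + y *s axis k 1) = a0*x^3 + a1*x^2*y + a2*x*y^2 + a3*y^3"
    if "x \<noteq> 0 \<or> y \<noteq> 0" for x y
    using Qa[OF that] P[of x y] by simp
  have e1: "\<alpha> v (axis j 1) = a0" using ev[of 1 0] by simp
  have e2: "\<alpha> v (axis k 1) = a3" using ev[of 0 1] by simp
  have e3: "\<alpha> v (axis j 1 + axis k 1) = a0 + a1 + a2 + a3" using ev[of 1 1] by (simp only: vector_smult_lid power_one mult_1_right mult_1 one_neq_zero simp_thms)
  have e4: "\<alpha> v (axis j 1 - axis k 1) = a0 - a1 + a2 - a3"
  proof -
    have "\<alpha> v (axis j 1 - axis k 1) = \<alpha> v (1 *s axis j 1 + (-1) *s axis k 1)"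
      by (simp add: vector_sneg_minus1[symmetric])
    also have "\<dots> = a0*1^3 + a1*1^2*(-1) + a2*1*(-1)^2 + a3*(-1)^3" by (rule ev) simp
    also have "\<dots> = a0 - a1 + a2 - a3" by simp
    finally show ?thesis .
  qed
  define x where "x = u$j - u$i * v$j / v$i"
  define y where "y = u$k - u$i * v$k / v$i"
  have ud: "u = (x *s axis j 1 + y *s axis k 1) + (u$i / v$i) *s v"
  proof (subst vec_eq_iff, intro allI)
    fix l
    show "u $ l = (x *s axis j 1 + y *s axis k 1 + (u $ i / v $ i) *s v) $ l"
    proof -
      have ax: "axis a (1::complex) $ b = (if b = a then 1 else 0)" for a b
        by (simp add: axis_def)
      consider "l = i" | "l = j" | "l = k" using three_cases[OF d, of l] by blast
      then show ?thesis
      proof cases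
        case 1 then show ?thesis using d vi by (simp add: ax)
      next
        case 2 then show ?thesis using d vi by (simp add: ax x_def)
      next
        case 3 then show ?thesis using d vi by (simp add: ax y_def)
      qed
    qed
  qed
  have "Qf \<alpha> v u = Qf \<alpha> v (x *s axis j 1 + y *s axis k 1)"
    by (subst ud, rule Q_inv[OF pg vC])
  also have "\<dots> = chartQ \<alpha> i j k v u"
    unfolding P chartQ_def e1 e2 e3 e4 chartF_def x_def[symmetric] y_def[symmetric]
    by (simp add: field_simps)
  finally show ?thesis .
qed

lemma line_cont: "continuous_on UNIV (\<lambda>t::complex. v + t *s axis l (1::complex))"
proof -
  have "(\<lambda>t::complex. v + t *s axis l (1::complex)) = (\<lambda>t. \<chi> m. v$m + t * axis l 1 $ m)"
    by (rule ext) (simp add: vec_eq_iff)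
  show ?thesis unfolding \<open>_ = _\<close> by (intro continuous_on_vec_lambda continuous_intros)
qed

lemma line_near:
  assumes "open U" "v \<in> U"
  obtains d where "d > 0" "\<And>t::complex. dist t 0 < d \<Longrightarrow> v + t *s axis l (1::complex) \<in> U"
proof -
  have "open ((\<lambda>t::complex. v + t *s axis l (1::complex)) -` U)"
    using line_cont assms(1) by (rule open_vimage[rotated])
  moreover have "0 \<in> (\<lambda>t::complex. v + t *s axis l (1::complex)) -` U" using assms(2) by simp
  ultimately obtain d where "d > 0" "ball 0 d \<subseteq> (\<lambda>t::complex. v + t *s axis l (1::complex)) -` U"
    by (meson open_contains_ball)
  then show ?thesis using that[of d] by (simp add: dist_commute subset_iff)
qed

lemma other_two: "\<exists>j k. (i::3) \<noteq> j \<and> i \<noteq> k \<and> j \<noteq> k"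
proof -
  have "(1::3) \<noteq> 2" "(1::3) \<noteq> 3" "(2::3) \<noteq> 3" by simp_all
  then show ?thesis using exhaust_3[of i] by metis
qed

lemma chart_indep4:
  fixes v :: "complex^3"
  assumes vi: "v$i \<noteq> 0" and d: "i\<noteq>j" "i\<noteq>k" "j\<noteq>k"
  shows "indep v (axis j 1)" "indep v (axis k 1)" "indep v (axis j 1 + axis k 1)" "indep v (axis j 1 - axis k 1)"
  using chart_indep[OF vi d, of 1 0] chart_indep[OF vi d, of 0 1] chart_indep[OF vi d, of 1 1]
    chart_indep[OF vi d, of 1 "-1"]
  by (simp_all add: vector_sneg_minus1[symmetric])

lemma alpha_cont:
  assumes pg: "path_geometry C \<alpha>" and U: "\<And>v. v \<in> U \<Longrightarrow> v \<in> C \<and> indep v w"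
  shows "continuous_on U (\<lambda>v. \<alpha> v w)"
proof -
  have c: "continuous_on (ptb C) (case_prod \<alpha>)" using pg unfolding path_geometry_def holo2_on_def by blast
  have "continuous_on U (\<lambda>v. case_prod \<alpha> (v, w))"
    by (rule continuous_on_compose2[OF c]) (auto intro!: continuous_intros simp: ptb_def U)
  then show ?thesis by simp
qed

lemma chartQ_cont:
  assumes pg: "path_geometry C \<alpha>" and d: "i\<noteq>j" "i\<noteq>k" "j\<noteq>k"
  shows "continuous_on {v. v \<in> C \<and> v$i \<noteq> 0} (\<lambda>v. chartQ \<alpha> i j k v u)"
proof -
  let ?U = "{v. v \<in> C \<and> v$i \<noteq> 0}"
  have a1: "continuous_on ?U (\<lambda>v. \<alpha> v (axis j 1))"
    by (rule alpha_cont[OF pg]) (use chart_indep4[OF _ d] in auto)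
  have a2: "continuous_on ?U (\<lambda>v. \<alpha> v (axis k 1))"
    by (rule alpha_cont[OF pg]) (use chart_indep4[OF _ d] in auto)
  have a3: "continuous_on ?U (\<lambda>v. \<alpha> v (axis j 1 + axis k 1))"
    by (rule alpha_cont[OF pg]) (use chart_indep4[OF _ d] in auto)
  have a4: "continuous_on ?U (\<lambda>v. \<alpha> v (axis j 1 - axis k 1))"
    by (rule alpha_cont[OF pg]) (use chart_indep4[OF _ d] in auto)
  show ?thesis unfolding chartQ_def chartF_def
    by (intro continuous_intros a1 a2 a3 a4) auto
qed

lemma chartQ_diff:
  fixes v :: "complex^3"
  assumes pg: "path_geometry C \<alpha>" and d: "i\<noteq>j" "i\<noteq>k" "j\<noteq>k" and vC: "v \<in> C" and vi: "v$i \<noteq> 0"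
  shows "(\<lambda>t. chartQ \<alpha> i j k (v + t *s axis l 1) u) field_differentiable (at 0)"
proof -
  have A: "(\<lambda>t. \<alpha> (v + t *s axis l 1) w) field_differentiable (at 0)" if "indep v w" for w
    by (rule holo2_dir(2)[OF pg]) (use that vC in \<open>simp add: ptb_def\<close>)
  note A4 = A[OF chart_indep4(1)[OF vi d]] A[OF chart_indep4(2)[OF vi d]]
    A[OF chart_indep4(3)[OF vi d]] A[OF chart_indep4(4)[OF vi d]]
  have V: "(\<lambda>t. (v + t *s axis l 1) $ m) field_differentiable (at 0)" for m
  proof -
    have "(\<lambda>t::complex. (v + t *s axis l 1) $ m) = (\<lambda>t. v$m + (axis l 1 $ m) * t)"
      by (rule ext) (simp add: mult.commute)
    then show ?thesis by (simp add: field_differentiable_add)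
  qed
  show ?thesis unfolding chartQ_def chartF_def
    by (intro derivative_intros A4 V) (simp_all add: vi)
qed

lemma Q_holo:
  assumes pg: "path_geometry C \<alpha>"
  shows "holo_on C (\<lambda>v. Qf \<alpha> v u)"
proof -
  have oC: "open C" using pg unfolding path_geometry_def proj_open_def by blast
  have z: "0 \<notin> C" using pg unfolding path_geometry_def proj_open_def by blast
  have loc: "\<exists>U. open U \<and> v \<in> U \<and> U \<subseteq> C \<and> continuous_on U (\<lambda>v. Qf \<alpha> v u) \<and>
     (\<forall>l. (\<lambda>t. Qf \<alpha> (v + t *s axis l 1) u) field_differentiable (at 0))" if vC: "v \<in> C" for v
  proof -
    have "v \<noteq> 0" using vC z by auto
    then obtain i where vi: "v$i \<noteq> 0" by (auto simp: vec_eq_iff)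
    obtain j k where d: "i\<noteq>j" "i\<noteq>k" "j\<noteq>k" using other_two[of i] by blast
    define U where "U = {v. v \<in> C \<and> v$i \<noteq> 0}"
    have oU: "open U"
    proof -
      have "open {v::complex^3. v$i \<noteq> 0}"
        by (rule open_Collect_neq) (intro continuous_intros)+
      then have "open (C \<inter> {v::complex^3. v$i \<noteq> 0})" using oC by auto
      moreover have "U = C \<inter> {v::complex^3. v$i \<noteq> 0}" unfolding U_def by auto
      ultimately show ?thesis by simp
    qed
    have eq: "Qf \<alpha> w u = chartQ \<alpha> i j k w u" if "w \<in> U" for w
      using that unfolding U_def by (intro Q_chart[OF pg _ _ d]) auto
    have cont: "continuous_on U (\<lambda>v. Qf \<alpha> v u)"
      using chartQ_cont[OF pg d, of u] unfolding U_def[symmetric]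
      by (rule continuous_on_cong[THEN iffD1, rotated 2]) (auto simp: eq)
    have dif: "(\<lambda>t. Qf \<alpha> (v + t *s axis l 1) u) field_differentiable (at 0)" for l
    proof -
      have vU: "v \<in> U" using vC vi unfolding U_def by simp
      obtain e where e: "e > 0" "\<And>t::complex. dist t 0 < e \<Longrightarrow> v + t *s axis l (1::complex) \<in> U"
        using line_near[OF oU vU, where l=l] by blast
      have "(\<lambda>t. chartQ \<alpha> i j k (v + t *s axis l 1) u) field_differentiable (at 0 within UNIV)"
        using chartQ_diff[OF pg d vC vi] by simp
      then have "(\<lambda>t. Qf \<alpha> (v + t *s axis l 1) u) field_differentiable (at 0 within UNIV)"
        by (rule field_differentiable_transform_within[OF e(1) UNIV_I, rotated]) (metis eq e(2))
      then show ?thesis by simp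
    qed
    show ?thesis
      by (intro exI[of _ U] conjI allI oU cont dif) (auto simp: U_def vC vi)
  qed
  have "continuous_on C (\<lambda>v. Qf \<alpha> v u)"
    unfolding continuous_on_eq_continuous_at[OF oC]
  proof
    fix v assume "v \<in> C"
    then obtain U where U: "open U" "v \<in> U" "continuous_on U (\<lambda>v. Qf \<alpha> v u)" using loc by blast
    then show "isCont (\<lambda>v. Qf \<alpha> v u) v" using continuous_on_eq_continuous_at by blast
  qed
  moreover have "\<forall>z\<in>C. \<forall>l. (\<lambda>t. Qf \<alpha> (z + t *s axis l 1) u) field_differentiable (at 0)"
    using loc by blast
  ultimately show ?thesis unfolding holo_on_def using oC by blast
qed

definition Dtri :: "(3\<Rightarrow>3\<Rightarrow>3\<Rightarrow>complex) \<Rightarrow> complex^3 \<Rightarrow> complex^3 \<Rightarrow> complex^3 \<Rightarrow> complex" where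
  "Dtri d x y z = (\<Sum>a\<in>UNIV. \<Sum>b\<in>UNIV. \<Sum>c\<in>UNIV. d a b c * x$a * y$b * z$c)"

definition Tp :: "(complex^3 \<Rightarrow> complex) \<Rightarrow> complex^3 \<Rightarrow> complex^3 \<Rightarrow> complex^3 \<Rightarrow> complex" where
  "Tp F x y z = (F (x+y+z) - F (x+y) - F (x+z) - F (y+z) + F x + F y + F z) / 6"

lemma D_add1: "Dtri d (x+x') y z = Dtri d x y z + Dtri d x' y z"
  unfolding Dtri_def by (simp add: distrib_left distrib_right sum.distrib)
lemma D_add2: "Dtri d x (y+y') z = Dtri d x y z + Dtri d x y' z"
  unfolding Dtri_def by (simp add: distrib_left distrib_right sum.distrib)
lemma D_add3: "Dtri d x y (z+z') = Dtri d x y z + Dtri d x y z'"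
  unfolding Dtri_def by (simp add: distrib_left distrib_right sum.distrib)

lemma Tp_D:
  assumes "\<And>w. F w = Dtri d w w w"
  shows "Tp F x y z = (Dtri d x y z + Dtri d x z y + Dtri d y x z + Dtri d y z x + Dtri d z x y + Dtri d z y x) / 6"
  unfolding Tp_def assms D_add1 D_add2 D_add3 by (simp add: algebra_simps)

lemma mif: "x * (if P then 1 else 0) = (if P then x else (0::complex))" by simp

lemma D_axis: "Dtri d (axis a 1) (axis b 1) (axis c 1) = d a b c"
  unfolding Dtri_def by (simp add: axis_def mif)

lemma p2: "(\<Sum>a\<in>UNIV. \<Sum>b\<in>UNIV. \<Sum>c\<in>UNIV. d a c b * w$a * w$b * w$c) = Dtri d w w (w::complex^3)"
  unfolding Dtri_def
  apply (rule sum.cong[OF refl])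
  apply (subst sum.swap)
  apply (simp add: ac_simps)
  done

lemma p3: "(\<Sum>a\<in>UNIV. \<Sum>b\<in>UNIV. \<Sum>c\<in>UNIV. d b a c * w$a * w$b * w$c) = Dtri d w w (w::complex^3)"
  unfolding Dtri_def
  apply (rule trans[OF sum.swap])
  apply (simp add: ac_simps)
  done

lemma p4: "(\<Sum>a\<in>UNIV. \<Sum>b\<in>UNIV. \<Sum>c\<in>UNIV. d b c a * w$a * w$b * w$c) = Dtri d w w (w::complex^3)"
  using p3[of "\<lambda>x y z. d x z y" w] p2[of d w] unfolding Dtri_def by simp

lemma p5: "(\<Sum>a\<in>UNIV. \<Sum>b\<in>UNIV. \<Sum>c\<in>UNIV. d c a b * w$a * w$b * w$c) = Dtri d w w (w::complex^3)"
  using p2[of "\<lambda>x y z. d y x z" w] p3[of d w] unfolding Dtri_def by simp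

lemma p6: "(\<Sum>a\<in>UNIV. \<Sum>b\<in>UNIV. \<Sum>c\<in>UNIV. d c b a * w$a * w$b * w$c) = Dtri d w w (w::complex^3)"
  using p2[of "\<lambda>x y z. d z y x" w] p4[of d w] unfolding Dtri_def by simp

lemma perm_sum: "(\<Sum>a\<in>UNIV. \<Sum>b\<in>UNIV. \<Sum>c\<in>UNIV. ((d a b c + d a c b + d b a c + d b c a + d c a b + d c b a)/6) * w$a * w$b * w$c)
     = Dtri d w w (w::complex^3)"
proof -
  have "(\<Sum>a\<in>UNIV. \<Sum>b\<in>UNIV. \<Sum>c\<in>UNIV. ((d a b c + d a c b + d b a c + d b c a + d c a b + d c b a)/6) * w$a * w$b * w$c)
     = ((\<Sum>a\<in>UNIV. \<Sum>b\<in>UNIV. \<Sum>c\<in>UNIV. d a b c * w$a * w$b * w$c)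
      + (\<Sum>a\<in>UNIV. \<Sum>b\<in>UNIV. \<Sum>c\<in>UNIV. d a c b * w$a * w$b * w$c)
      + (\<Sum>a\<in>UNIV. \<Sum>b\<in>UNIV. \<Sum>c\<in>UNIV. d b a c * w$a * w$b * w$c)
      + (\<Sum>a\<in>UNIV. \<Sum>b\<in>UNIV. \<Sum>c\<in>UNIV. d b c a * w$a * w$b * w$c)
      + (\<Sum>a\<in>UNIV. \<Sum>b\<in>UNIV. \<Sum>c\<in>UNIV. d c a b * w$a * w$b * w$c)
      + (\<Sum>a\<in>UNIV. \<Sum>b\<in>UNIV. \<Sum>c\<in>UNIV. d c b a * w$a * w$b * w$c)) / 6"
    by (simp add: sum.distrib sum_divide_distrib add_divide_distrib distrib_right)
  also have "\<dots> = Dtri d w w w"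
    using p2[of d w] p3[of d w] p4[of d w] p5[of d w] p6[of d w] by (simp add: Dtri_def)
  finally show ?thesis .
qed


lemma polar:
  assumes "\<And>w. F w = Dtri d w w w"
  shows "(\<Sum>a\<in>UNIV. \<Sum>b\<in>UNIV. \<Sum>c\<in>UNIV. Tp F (axis a 1) (axis b 1) (axis c 1) * w$a * w$b * w$c) = F w"
  unfolding Tp_D[OF assms] D_axis perm_sum assms ..

lemma D_dadd: "Dtri (\<lambda>a b c. d1 a b c + d2 a b c) x y z = Dtri d1 x y z + Dtri d2 x y z"
  unfolding Dtri_def by (simp add: distrib_right sum.distrib)

lemma D_dscale: "Dtri (\<lambda>a b c. k * d1 a b c) x y z = k * Dtri d1 x y z"
  unfolding Dtri_def by (simp add: sum_distrib_left ac_simps)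

lemma sum2_mult: "(\<Sum>a\<in>A. \<Sum>b\<in>B. f a b) * (R::complex) = (\<Sum>a\<in>A. \<Sum>b\<in>B. f a b * R)"
  by (simp add: sum_distrib_right)

lemma prod3: "(\<Sum>a\<in>UNIV. p a * w$a) * (\<Sum>b\<in>UNIV. q b * w$b) * (\<Sum>c\<in>UNIV. r c * w$c)
   = Dtri (\<lambda>a b c. p a * q b * r c) w w (w::complex^3)"
proof -
  have "(\<Sum>a\<in>UNIV. p a * w$a) * (\<Sum>b\<in>UNIV. q b * w$b) * (\<Sum>c\<in>UNIV. r c * w$c)
     = (\<Sum>a\<in>UNIV. \<Sum>b\<in>UNIV. (p a * w$a) * (q b * w$b)) * (\<Sum>c\<in>UNIV. r c * w$c)"
    unfolding sum_product[of "\<lambda>a. p a * w$a" UNIV "\<lambda>b. q b * w$b" UNIV] ..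
  also have "\<dots> = (\<Sum>a\<in>UNIV. \<Sum>b\<in>UNIV. (p a * w$a) * (q b * w$b) * (\<Sum>c\<in>UNIV. r c * w$c))"
    by (rule sum2_mult)
  also have "\<dots> = (\<Sum>a\<in>UNIV. \<Sum>b\<in>UNIV. \<Sum>c\<in>UNIV. (p a * w$a) * (q b * w$b) * (r c * w$c))"
    by (intro sum.cong refl) (rule sum_distrib_left)
  also have "\<dots> = Dtri (\<lambda>a b c. p a * q b * r c) w w w"
    unfolding Dtri_def by (intro sum.cong refl) (simp add: ac_simps)
  finally show ?thesis .
qed

lemma lin_form:
  fixes w :: "complex^3"
  assumes "j \<noteq> i"
  shows "(\<Sum>l\<in>UNIV. ((if l = j then 1 else 0) - (if l = i then c else 0)) * w$l) = w$j - w$i * c"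
  using assms by (simp add: left_diff_distrib sum_subtractf if_distrib[of "\<lambda>x. x * _"] cong: if_cong)

lemma Q_cubic:
  assumes pg: "path_geometry C \<alpha>" and vC: "v \<in> C"
  shows "\<exists>d. \<forall>w. Qf \<alpha> v w = Dtri d w w w"
proof -
  have z: "0 \<notin> C" using pg unfolding path_geometry_def proj_open_def by blast
  have "v \<noteq> 0" using vC z by auto
  then obtain i where vi: "v$i \<noteq> 0" by (auto simp: vec_eq_iff)
  obtain j k where d: "i\<noteq>j" "i\<noteq>k" "j\<noteq>k" using other_two[of i] by blast
  define L1 where "L1 l = (if l = j then 1 else 0) - (if l = i then v$j / v$i else 0)" for l
  define L2 where "L2 l = (if l = k then 1 else 0) - (if l = i then v$k / v$i else 0)" for l
  define A0 where "A0 = \<alpha> v (axis j 1)"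
  define A3 where "A3 = \<alpha> v (axis k 1)"
  define S where "S = \<alpha> v (axis j 1 + axis k 1)"
  define Dm where "Dm = \<alpha> v (axis j 1 - axis k 1)"
  define c1 where "c1 = (S - Dm)/2 - A3"
  define c2 where "c2 = (S + Dm)/2 - A0"
  have x: "(\<Sum>l\<in>UNIV. L1 l * w$l) = w$j - w$i * v$j / v$i" for w :: "complex^3"
    unfolding L1_def using lin_form[of j i "v$j / v$i" w] d by simp
  have y: "(\<Sum>l\<in>UNIV. L2 l * w$l) = w$k - w$i * v$k / v$i" for w :: "complex^3"
    unfolding L2_def using lin_form[of k i "v$k / v$i" w] d by simp
  define dd where "dd a b c = A0 * (L1 a * L1 b * L1 c) + c1 * (L1 a * L1 b * L2 c)
       + c2 * (L1 a * L2 b * L2 c) + A3 * (L2 a * L2 b * L2 c)" for a b c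
  have "Qf \<alpha> v w = Dtri dd w w w" for w
  proof -
    let ?X = "\<Sum>l\<in>UNIV. L1 l * w$l" and ?Y = "\<Sum>l\<in>UNIV. L2 l * w$l"
    have "Qf \<alpha> v w = A0 * (?X * ?X * ?X) + c1 * (?X * ?X * ?Y) + c2 * (?X * ?Y * ?Y) + A3 * (?Y * ?Y * ?Y)"
      unfolding Q_chart[OF pg vC vi d] chartQ_def chartF_def x y A0_def[symmetric] A3_def[symmetric]
        S_def[symmetric] Dm_def[symmetric] c1_def[symmetric] c2_def[symmetric]
      by (simp add: power2_eq_square power3_eq_cube ac_simps)
    also have "\<dots> = Dtri dd w w w"
      unfolding prod3 dd_def D_dadd D_dscale ..
    finally show ?thesis .
  qed
  then show ?thesis by blast
qed


lemma holo_add: "holo_on U f \<Longrightarrow> holo_on U g \<Longrightarrow> holo_on U (\<lambda>v. f v + g v)"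
  unfolding holo_on_def by (auto intro!: continuous_intros field_differentiable_add)

lemma holo_diff: "holo_on U f \<Longrightarrow> holo_on U g \<Longrightarrow> holo_on U (\<lambda>v. f v - g v)"
  unfolding holo_on_def by (auto intro!: continuous_intros field_differentiable_diff)

lemma holo_div6: "holo_on U f \<Longrightarrow> holo_on U (\<lambda>v. f v / 6)"
  unfolding holo_on_def by (auto intro!: continuous_intros field_differentiable_divide)

definition cc :: "(complex^3 \<Rightarrow> complex^3 \<Rightarrow> complex) \<Rightarrow> 3 \<Rightarrow> 3 \<Rightarrow> 3 \<Rightarrow> complex^3 \<Rightarrow> complex" where
  "cc \<alpha> a b c v = Tp (Qf \<alpha> v) (axis a 1) (axis b 1) (axis c 1)"

lemma cc_holo:
  assumes pg: "path_geometry C \<alpha>"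
  shows "holo_on C (cc \<alpha> a b c)"
proof -
  have "holo_on C (\<lambda>v. Tp (Qf \<alpha> v) (axis a 1) (axis b 1) (axis c 1))"
    unfolding Tp_def
    by (intro holo_div6 holo_add holo_diff Q_holo[OF pg])
  then show ?thesis unfolding cc_def[abs_def] by simp
qed

lemma cc_eval:
  assumes pg: "path_geometry C \<alpha>" and vC: "v \<in> C"
  shows "cubic_eval (cc \<alpha>) v w = Qf \<alpha> v w"
proof -
  obtain d where d: "\<And>w. Qf \<alpha> v w = Dtri d w w w" using Q_cubic[OF pg vC] by blast
  show ?thesis unfolding cubic_eval_def cc_def by (rule polar[OF d])
qed

lemma holo_coord: "open U \<Longrightarrow> holo_on U (\<lambda>v::complex^3. v $ i)"
  unfolding holo_on_def
proof (intro conjI ballI allI)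
  show "continuous_on U (\<lambda>v::complex^3. v $ i)" by (intro continuous_intros)
  fix z :: "complex^3" and l
  have "(\<lambda>t::complex. (z + t *s axis l 1) $ i) = (\<lambda>t. z$i + (axis l 1 $ i) * t)"
    by (rule ext) (simp add: mult.commute)
  then show "(\<lambda>t. (z + t *s axis l 1) $ i) field_differentiable (at 0)"
    by (simp add: field_differentiable_add)
qed

theorem proposition2p3:
  fixes C :: "(complex^3) set" and \<alpha> :: "complex^3 \<Rightarrow> complex^3 \<Rightarrow> complex"
  assumes "proj_open C"
    and "path_geometry C \<alpha>"
    and "flat C \<alpha>"
  shows "\<exists>c. section3 C c \<and>
           (\<forall>(v,w)\<in>ptb C. cubic_eval c v w = 0 \<longrightarrow> \<alpha> v w = std_geometry v w) \<and>
           ((\<forall>v\<in>C. \<forall>w. cubic_eval c v w = 0) \<longrightarrow> (\<exists>\<phi>. path_iso C std_geometry C \<alpha> \<phi>))"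
proof -
  have pg: "path_geometry C \<alpha>" by fact
  have po: "proj_open C" by fact
  have oC: "open C" and sc: "\<And>v a. v \<in> C \<Longrightarrow> a \<noteq> 0 \<Longrightarrow> a *s v \<in> C"
    using po unfolding proj_open_def by auto
  let ?c = "cc \<alpha>"
  have ev: "\<And>v w. v \<in> C \<Longrightarrow> cubic_eval ?c v w = Qf \<alpha> v w" using cc_eval[OF pg] by blast
  have s3: "section3 C ?c"
    unfolding section3_def
  proof (intro conjI allI ballI impI)
    show "holo_on C (?c i j k)" for i j k using cc_holo[OF pg] .
    fix v assume vC: "v \<in> C"
    show "cubic_eval ?c v (w + s *s v) = cubic_eval ?c v w" for w s
      using ev[OF vC] Q_inv[OF pg vC] by simp
    show "cubic_eval ?c (a *s v) w = cubic_eval ?c v w" if "a \<noteq> 0" for w a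
      using ev[OF vC] ev[OF sc[OF vC that]] Q_hom[OF pg vC that] by simp
  qed
  have z2: "\<forall>(v,w)\<in>ptb C. cubic_eval ?c v w = 0 \<longrightarrow> \<alpha> v w = std_geometry v w"
    using ev unfolding ptb_def Qf_def std_geometry_def by auto
  have z3: "\<exists>\<phi>. path_iso C std_geometry C \<alpha> \<phi>" if h: "\<forall>v\<in>C. \<forall>w. cubic_eval ?c v w = 0"
  proof -
    have a0: "\<alpha> v w = 0" if "v \<in> C" "indep v w" for v w
      using h[rule_format, OF that(1), of w] ev[OF that(1), of w] that(2) unfolding Qf_def by simp
    have "path_iso C std_geometry C \<alpha> (\<lambda>v. v)"
      unfolding path_iso_def
    proof (intro conjI allI ballI impI)
      show "proj_open C" by fact
      show "proj_open C" by fact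
      show "holo_on C (\<lambda>v. v $ i)" for i using holo_coord[OF oC] .
      show "\<exists>v\<in>C. \<exists>a. a \<noteq> 0 \<and> v = a *s v'" if "v' \<in> C" for v'
        using that by (intro bexI[of _ v'] exI[of _ 1]) auto
      show "\<exists>b. u = b *s v" if "u = a *s v" for u v a using that by blast
      show "\<exists>L. ((\<lambda>v. v) has_derivative L) (at v) \<and> inj L" for v
        by (intro exI[of _ "\<lambda>v. v"] conjI has_derivative_ident) (simp add: inj_on_def)
      fix D g assume l: "leaf C std_geometry D g"
      show "leaf C \<alpha> D ((\<lambda>v. v) \<circ> g)"
        using l unfolding leaf_def std_geometry_def by (auto simp: o_def a0)
    qed auto
    then show ?thesis by blast
  qed
  show ?thesis using s3 z2 z3 by blast
qed

end
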